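(* Let $\Gamma,\Delta$ be finite multisets of formulas, $p$ a propositional variable and $a$ an agent symbol. Then there exists a formula $A$ such that: (i) $\mathsf{V}(A)\subseteq\mathsf{V}(\Gamma\cup\Delta)\setminus\{p\}$ and $\mathsf{Agt}(A)\subseteq\mathsf{Agt}(\Gamma\cup\Delta)\setminus\{a\}$; (ii) $\mathsf{G}(\mathbf{KT}_D)\vdash\Gamma,A\Rightarrow\Delta$; (iii) for all finite multisets $\Pi,\Lambda$ of formulas with $p\notin\mathsf{V}(\Pi\cup\Lambda)$ and $a\notin\mathsf{Agt}(\Pi\cup\Lambda)$: if $\mathsf{G}(\mathbf{KT}_D)\vdash\Pi,\Gamma\Rightarrow\Delta,\Lambda$, then $\mathsf{G}(\mathbf{KT}_D)\vdash\Pi\Rightarrow A,\Lambda$.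
   Context: Language: fix a finite nonempty set $\mathsf{Agt}$ of agent symbols and a countable set $\mathsf{Prop}$ of propositional variables; $\mathsf{Grp}$ is the set of nonempty subsets of $\mathsf{Agt}$. Formulas: $\alpha::=p\mid\bot\mid\alpha\wedge\alpha\mid\alpha\vee\alpha\mid\alpha\rightarrow\alpha\mid\neg\alpha\mid D_G\alpha$ with $p\in\mathsf{Prop}$, $G\in\mathsf{Grp}$. $\mathsf{V}(\cdot)$ is the set of propositional variables occurring, $\mathsf{Agt}(\cdot)$ the set of agent symbols occurring (the union of all $G$ with $D_G$ occurring); for multisets these are unions. An outmost-boxed formula is one of the form $D_G\gamma$. Sequent calculus $\mathsf{G}(\mathbf{KT}_D)$: sequents $\Gamma\Rightarrow\Delta$ are pairs of finite multisets; $\vdash S$ means $S$ is the root of a finite tree built from initial sequents by the rules. Initial sequents $\Gamma,p\Rightarrow p,\Delta$ ($p\in\mathsf{Prop}$) and $\bot,\Gamma\Rightarrow\Delta$. Rules: $(R\wedge)$ from $\Gamma\Rightarrow\Delta,\alpha_1$ and $\Gamma\Rightarrow\Delta,\alpha_2$ infer $\Gamma\Rightarrow\Delta,\alpha_1\wedge\alpha_2$; $(L\wedge)$ from $\alpha_1,\alpha_2,\Gamma\Rightarrow\Delta$ infer $\alpha_1\wedge\alpha_2,\Gamma\Rightarrow\Delta$; $(R\vee)$ from $\Gamma\Rightarrow\Delta,\alpha_1,\alpha_2$ infer $\Gamma\Rightarrow\Delta,\alpha_1\vee\alpha_2$; $(L\vee)$ from $\alpha_1,\Gamma\Rightarrow\Delta$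 and $\alpha_2,\Gamma\Rightarrow\Delta$ infer $\alpha_1\vee\alpha_2,\Gamma\Rightarrow\Delta$; $(R\rightarrow)$ from $\alpha_1,\Gamma\Rightarrow\Delta,\alpha_2$ infer $\Gamma\Rightarrow\Delta,\alpha_1\rightarrow\alpha_2$; $(L\rightarrow)$ from $\Gamma\Rightarrow\Delta,\alpha_1$ and $\alpha_2,\Gamma\Rightarrow\Delta$ infer $\alpha_1\rightarrow\alpha_2,\Gamma\Rightarrow\Delta$; $(R\neg)$ from $\alpha,\Gamma\Rightarrow\Delta$ infer $\Gamma\Rightarrow\Delta,\neg\alpha$; $(L\neg)$ from $\Gamma\Rightarrow\Delta,\alpha$ infer $\neg\alpha,\Gamma\Rightarrow\Delta$; $(D_K)$: from $\alpha_1,\dots,\alpha_n\Rightarrow\beta$ ($n\ge0$) infer $\Sigma,D_{G_1}\alpha_1,\dots,D_{G_n}\alpha_n\Rightarrow D_G\beta,\Omega$, provided $G_i\subseteq G$ for all $i$, $\Sigma$ consists only of propositional variables, $\bot$, and formulas $D_H\gamma$ with $H\not\subseteq G$, and $\Omega$ consists only of propositional variables, $\bot$ and outmost-boxed formulas; $(D_T)$: from $D_G\alpha,\alpha,\Gamma\Rightarrow\Delta$ infer $D_G\alpha,\Gamma\Rightarrow\Delta$. *)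

theory Defs
  imports Main "HOL-Library.Multiset" "HOL-Library.Countable"
begin

text \<open>D G \<alpha> is the distributed-knowledge modality;
groups G are required to be nonempty via wff.\<close>

datatype ('a, 'p) fm =
    Var 'p
  | Bot
  | Conj "('a, 'p) fm" "('a, 'p) fm"
  | Disj "('a, 'p) fm" "('a, 'p) fm"
  | Imp "('a, 'p) fm" "('a, 'p) fm"
  | Neg "('a, 'p) fm"
  | D "'a set" "('a, 'p) fm"

fun wff :: "('a, 'p) fm \<Rightarrow> bool" where
  "wff (Var p) = True"
| "wff Bot = True"
| "wff (Conj a b) = (wff a \<and> wff b)"
| "wff (Disj a b) = (wff a \<and> wff b)"
| "wff (Imp a b) = (wff a \<and> wff b)"
| "wff (Neg a) = wff a"
| "wff (D G a) = (G \<noteq> {} \<and> wff a)"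

fun vars :: "('a, 'p) fm \<Rightarrow> 'p set" where
  "vars (Var p) = {p}"
| "vars Bot = {}"
| "vars (Conj a b) = vars a \<union> vars b"
| "vars (Disj a b) = vars a \<union> vars b"
| "vars (Imp a b) = vars a \<union> vars b"
| "vars (Neg a) = vars a"
| "vars (D G a) = vars a"

fun agts :: "('a, 'p) fm \<Rightarrow> 'a set" where
  "agts (Var p) = {}"
| "agts Bot = {}"
| "agts (Conj a b) = agts a \<union> agts b"
| "agts (Disj a b) = agts a \<union> agts b"
| "agts (Imp a b) = agts a \<union> agts b"
| "agts (Neg a) = agts a"
| "agts (D G a) = G \<union> agts a"

definition mvars :: "('a, 'p) fm multiset \<Rightarrow> 'p set" where
  "mvars M = (\<Union>A\<in>set_mset M. vars A)"

definition magts :: "('a, 'p) fm multiset \<Rightarrow> 'a set" where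
  "magts M = (\<Union>A\<in>set_mset M. agts A)"

definition is_boxed :: "('a, 'p) fm \<Rightarrow> bool" where
  "is_boxed A = (\<exists>G B. A = D G B)"

definition sigma_ok :: "'a set \<Rightarrow> ('a, 'p) fm \<Rightarrow> bool" where
  "sigma_ok G A = ((\<exists>p. A = Var p) \<or> A = Bot \<or> (\<exists>H B. A = D H B \<and> \<not> H \<subseteq> G))"

definition omega_ok :: "('a, 'p) fm \<Rightarrow> bool" where
  "omega_ok A = ((\<exists>p. A = Var p) \<or> A = Bot \<or> is_boxed A)"

inductive derivable :: "('a, 'p) fm multiset \<Rightarrow> ('a, 'p) fm multiset \<Rightarrow> bool" where
  Ax: "derivable (add_mset (Var p) \<Gamma>) (add_mset (Var p) \<Delta>)"
| BotL: "derivable (add_mset Bot \<Gamma>) \<Delta>"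
| ConjR: "derivable \<Gamma> (add_mset a1 \<Delta>) \<Longrightarrow> derivable \<Gamma> (add_mset a2 \<Delta>) \<Longrightarrow>
          derivable \<Gamma> (add_mset (Conj a1 a2) \<Delta>)"
| ConjL: "derivable (add_mset a1 (add_mset a2 \<Gamma>)) \<Delta> \<Longrightarrow>
          derivable (add_mset (Conj a1 a2) \<Gamma>) \<Delta>"
| DisjR: "derivable \<Gamma> (add_mset a1 (add_mset a2 \<Delta>)) \<Longrightarrow>
          derivable \<Gamma> (add_mset (Disj a1 a2) \<Delta>)"
| DisjL: "derivable (add_mset a1 \<Gamma>) \<Delta> \<Longrightarrow> derivable (add_mset a2 \<Gamma>) \<Delta> \<Longrightarrow>
          derivable (add_mset (Disj a1 a2) \<Gamma>) \<Delta>"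
| ImpR: "derivable (add_mset a1 \<Gamma>) (add_mset a2 \<Delta>) \<Longrightarrow>
          derivable \<Gamma> (add_mset (Imp a1 a2) \<Delta>)"
| ImpL: "derivable \<Gamma> (add_mset a1 \<Delta>) \<Longrightarrow> derivable (add_mset a2 \<Gamma>) \<Delta> \<Longrightarrow>
          derivable (add_mset (Imp a1 a2) \<Gamma>) \<Delta>"
| NegR: "derivable (add_mset a \<Gamma>) \<Delta> \<Longrightarrow> derivable \<Gamma> (add_mset (Neg a) \<Delta>)"
| NegL: "derivable \<Gamma> (add_mset a \<Delta>) \<Longrightarrow> derivable (add_mset (Neg a) \<Gamma>) \<Delta>"
| DK: "derivable (mset (map snd xs)) {#b#} \<Longrightarrow>
       (\<forall>(Gi, ai) \<in> set xs. Gi \<subseteq> G) \<Longrightarrow>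
       (\<forall>s \<in># \<Sigma>. sigma_ok G s) \<Longrightarrow>
       (\<forall>w \<in># \<Omega>. omega_ok w) \<Longrightarrow>
       derivable (\<Sigma> + mset (map (\<lambda>(Gi, ai). D Gi ai) xs)) (add_mset (D G b) \<Omega>)"
| DT: "derivable (add_mset (D G a) (add_mset a \<Gamma>)) \<Delta> \<Longrightarrow>
       derivable (add_mset (D G a) \<Gamma>) \<Delta>"

end

theory Submission
  imports Defs
begin

fun sat :: "'w set \<Rightarrow> ('a set \<Rightarrow> 'w \<Rightarrow> 'w \<Rightarrow> bool) \<Rightarrow> ('w \<Rightarrow> 'p \<Rightarrow> bool) \<Rightarrow> 'w \<Rightarrow> ('a, 'p) fm \<Rightarrow> bool" where
  "sat W R V w (Var q) = V w q"
| "sat W R V w Bot = False"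
| "sat W R V w (Conj x y) = (sat W R V w x \<and> sat W R V w y)"
| "sat W R V w (Disj x y) = (sat W R V w x \<or> sat W R V w y)"
| "sat W R V w (Imp x y) = (sat W R V w x \<longrightarrow> sat W R V w y)"
| "sat W R V w (Neg x) = (\<not> sat W R V w x)"
| "sat W R V w (D G x) = (\<forall>v\<in>W. R G w v \<longrightarrow> sat W R V v x)"

definition pmodel :: "'w set \<Rightarrow> ('a set \<Rightarrow> 'w \<Rightarrow> 'w \<Rightarrow> bool) \<Rightarrow> bool" where
  "pmodel W R = ((\<forall>G w. w \<in> W \<longrightarrow> R G w w) \<and> (\<forall>G G' w v. G \<subseteq> G' \<longrightarrow> R G' w v \<longrightarrow> R G w v))"

lemma soundness:
  assumes "derivable \<Gamma> \<Delta>"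
  shows "pmodel W R \<Longrightarrow> w \<in> W \<Longrightarrow> \<forall>f\<in>#\<Gamma>. sat W R V w f \<Longrightarrow> \<exists>f\<in>#\<Delta>. sat W R V w f"
  using assms
proof (induction arbitrary: w rule: derivable.induct)
  case (DK xs b G \<Sigma> \<Omega>)
  have "sat W R V w (D G b)"
  proof (unfold sat.simps, intro ballI impI)
    fix v assume v: "v \<in> W" "R G w v"
    have "\<forall>f\<in>#mset (map snd xs). sat W R V v f"
    proof
      fix f assume "f \<in># mset (map snd xs)"
      then obtain Gi where gi: "(Gi, f) \<in> set xs" by auto
      then have "D Gi f \<in># \<Sigma> + mset (map (\<lambda>(Gi, ai). D Gi ai) xs)" 
        using gi by (auto simp: image_iff intro!: bexI[of _ "(Gi,f)"])
      then have "sat W R V w (D Gi f)" by (rule bspec[OF DK.prems(3)])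
      moreover have "Gi \<subseteq> G" using DK.hyps(2) gi by fastforce
      then have "R Gi w v" using v DK.prems(1) unfolding pmodel_def by blast
      ultimately show "sat W R V v f" using v by (simp only: sat.simps)
    qed
    then show "sat W R V v b" using DK.IH[OF DK.prems(1) v(1)] by auto
  qed
  then show ?case by simp
next
  case (DT G a \<Gamma> \<Delta>)
  then have "sat W R V w a" unfolding pmodel_def by auto
  then show ?case using DT by auto
next
  case (Ax p \<Gamma> \<Delta>) then show ?case by simp
next
  case (BotL \<Gamma> \<Delta>) then show ?case by simp
next
  case (ConjR \<Gamma> a1 \<Delta> a2) then show ?case by auto
next
  case (ConjL a1 a2 \<Gamma> \<Delta>) then show ?case by simp
next
  case (DisjR \<Gamma> a1 a2 \<Delta>) then show ?case by auto
next
  case (DisjL a1 \<Gamma> \<Delta> a2) then show ?case by auto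
next
  case (ImpR a1 \<Gamma> a2 \<Delta>) then show ?case by auto
next
  case (ImpL \<Gamma> a1 \<Delta> a2) then show ?case by auto
next
  case (NegR a \<Gamma> \<Delta>) then show ?case by auto
next
  case (NegL \<Gamma> a \<Delta>) then show ?case by auto
qed

definition finL :: "('a, 'p) fm \<Rightarrow> bool" where
  "finL f = ((\<exists>q. f = Var q) \<or> (\<exists>G a. f = D G a))"

definition finR :: "('a, 'p) fm \<Rightarrow> bool" where
  "finR f = ((\<exists>q. f = Var q) \<or> f = Bot \<or> (\<exists>G a. f = D G a))"

fun closX :: "('a, 'p) fm set \<Rightarrow> ('a, 'p) fm set \<Rightarrow> ('a, 'p) fm multiset \<Rightarrow> ('a, 'p) fm \<Rightarrow> bool" where
  "closX X Y Gf (Var q) = (Var q \<in># Gf)"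
| "closX X Y Gf Bot = False"
| "closX X Y Gf (Conj a b) = (a \<in> X \<and> b \<in> X)"
| "closX X Y Gf (Disj a b) = (a \<in> X \<or> b \<in> X)"
| "closX X Y Gf (Imp a b) = (a \<in> Y \<or> b \<in> X)"
| "closX X Y Gf (Neg a) = (a \<in> Y)"
| "closX X Y Gf (D G a) = (a \<in> X \<and> D G a \<in># Gf)"

fun closY :: "('a, 'p) fm set \<Rightarrow> ('a, 'p) fm set \<Rightarrow> ('a, 'p) fm multiset \<Rightarrow> ('a, 'p) fm \<Rightarrow> bool" where
  "closY X Y Df (Var q) = (Var q \<in># Df)"
| "closY X Y Df Bot = True"
| "closY X Y Df (Conj a b) = (a \<in> Y \<or> b \<in> Y)"
| "closY X Y Df (Disj a b) = (a \<in> Y \<and> b \<in> Y)"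
| "closY X Y Df (Imp a b) = (a \<in> X \<and> b \<in> Y)"
| "closY X Y Df (Neg a) = (a \<in> X)"
| "closY X Y Df (D G a) = (D G a \<in># Df)"

lemma closX_mono: "closX X Y Gf f \<Longrightarrow> X \<subseteq> X' \<Longrightarrow> Y \<subseteq> Y' \<Longrightarrow> Gf \<subseteq># Gf' \<Longrightarrow> closX X' Y' Gf' f"
  by (cases f) (auto dest: mset_subset_eqD)

lemma closY_mono: "closY X Y Df f \<Longrightarrow> X \<subseteq> X' \<Longrightarrow> Y \<subseteq> Y' \<Longrightarrow> Df \<subseteq># Df' \<Longrightarrow> closY X' Y' Df' f"
  by (cases f) (auto dest: mset_subset_eqD)

definition satur where
  "satur X Y Gf Df = (\<not> derivable Gf Df \<and> (\<forall>f\<in>#Gf. finL f) \<and> (\<forall>f\<in>#Df. finR f)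
     \<and> (\<forall>f\<in>X. closX X Y Gf f) \<and> (\<forall>f\<in>Y. closY X Y Df f))"

definition msz :: "('a, 'p) fm multiset \<Rightarrow> nat" where
  "msz M = sum_mset (image_mset (\<lambda>f. 2 * size f + 1) M)"

lemma msz_add[simp]: "msz (add_mset f M) = 2 * size f + 1 + msz M"
  by (simp add: msz_def)

lemma msz_empty[simp]: "msz {#} = 0"
  by (simp add: msz_def)

lemma msz_plus[simp]: "msz (M + N) = msz M + msz N"
  by (simp add: msz_def)

definition concl where
  "concl Gw Dw Gf Df = (\<exists>X Y Gf' Df'. set_mset Gw \<subseteq> X \<and> set_mset Dw \<subseteq> Y \<and> Gf \<subseteq># Gf' \<and> Df \<subseteq># Df' \<and> satur X Y Gf' Df')"

lemma addX:
  assumes "concl Gw' Dw' Gf' Df'"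
    and "\<And>X Y Gf''. set_mset Gw' \<subseteq> X \<Longrightarrow> set_mset Dw' \<subseteq> Y \<Longrightarrow> Gf' \<subseteq># Gf'' \<Longrightarrow> closX X Y Gf'' f"
    and "set_mset Gw \<subseteq> insert f (set_mset Gw')" "set_mset Dw \<subseteq> set_mset Dw'" "Gf \<subseteq># Gf'" "Df \<subseteq># Df'"
  shows "concl Gw Dw Gf Df"
proof -
  obtain X Y Gf'' Df'' where c: "set_mset Gw' \<subseteq> X" "set_mset Dw' \<subseteq> Y" "Gf' \<subseteq># Gf''" "Df' \<subseteq># Df''" "satur X Y Gf'' Df''"
    using assms(1) unfolding concl_def by blast
  have cf: "closX (insert f X) Y Gf'' f" using assms(2)[OF c(1,2,3)] closX_mono by blast
  have "satur (insert f X) Y Gf'' Df''"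
    using c(5) cf unfolding satur_def
    by (auto intro: closX_mono closY_mono)
  then show ?thesis unfolding concl_def using c assms(3-6)
    by (meson dual_order.trans insert_mono subset_mset.order_trans)
qed

lemma addY:
  assumes "concl Gw' Dw' Gf' Df'"
    and "\<And>X Y Df''. set_mset Gw' \<subseteq> X \<Longrightarrow> set_mset Dw' \<subseteq> Y \<Longrightarrow> Df' \<subseteq># Df'' \<Longrightarrow> closY X Y Df'' f"
    and "set_mset Gw \<subseteq> set_mset Gw'" "set_mset Dw \<subseteq> insert f (set_mset Dw')" "Gf \<subseteq># Gf'" "Df \<subseteq># Df'"
  shows "concl Gw Dw Gf Df"
proof -
  obtain X Y Gf'' Df'' where c: "set_mset Gw' \<subseteq> X" "set_mset Dw' \<subseteq> Y" "Gf' \<subseteq># Gf''" "Df' \<subseteq># Df''" "satur X Y Gf'' Df''"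
    using assms(1) unfolding concl_def by blast
  have cf: "closY X (insert f Y) Df'' f" using assms(2)[OF c(1,2,4)] closY_mono by blast
  have "satur X (insert f Y) Gf'' Df''"
    using c(5) cf unfolding satur_def
    by (auto intro: closX_mono closY_mono)
  then show ?thesis unfolding concl_def using c assms(3-6)
    by (meson dual_order.trans insert_mono subset_mset.order_trans)
qed

lemma sat_ex:
  "\<not> derivable (Gw + Gf) (Dw + Df) \<Longrightarrow> \<forall>f\<in>#Gf. finL f \<Longrightarrow> \<forall>f\<in>#Df. finR f \<Longrightarrow> concl Gw Dw Gf Df"
proof (induction "msz Gw + msz Dw" arbitrary: Gw Dw Gf Df rule: less_induct)
  case less
  note IH = less.hyps
  show ?case
  proof (cases "Gw = {#}")
    case False
    then obtain f G0 where Gw: "Gw = add_mset f G0" by (metis multiset_cases)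
    have nd: "\<not> derivable (add_mset f (G0 + Gf)) (Dw + Df)" using less.prems(1) Gw by simp
    show ?thesis
    proof (cases f)
      case (Var q)
      have "concl G0 Dw (add_mset f Gf) Df"
        using IH[of G0 Dw "add_mset f Gf" Df] nd less.prems Var Gw by (simp add: finL_def)
      then show ?thesis
        by (rule addX[where f=f]) (auto simp: Gw Var dest: mset_subset_eqD)
    next
      case Bot
      then show ?thesis using nd derivable.BotL by blast
    next
      case (Conj a b)
      have u: "\<not> derivable (add_mset a (add_mset b G0) + Gf) (Dw + Df)"
        using nd derivable.ConjL[of a b "G0 + Gf" "Dw + Df"] Conj by auto
      have "concl (add_mset a (add_mset b G0)) Dw Gf Df"
        using IH[OF _ u less.prems(2,3)] Gw Conj by simp
      then show ?thesis
        by (rule addX[where f=f]) (auto simp: Gw Conj)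
    next
      case (Disj a b)
      have "\<not> derivable (add_mset a G0 + Gf) (Dw + Df) \<or> \<not> derivable (add_mset b G0 + Gf) (Dw + Df)"
        using nd derivable.DisjL[of a "G0 + Gf" "Dw + Df" b] Disj by auto
      then show ?thesis
      proof
        assume u: "\<not> derivable (add_mset a G0 + Gf) (Dw + Df)"
        have "concl (add_mset a G0) Dw Gf Df" using IH[OF _ u less.prems(2,3)] Gw Disj by simp
        then show ?thesis by (rule addX[where f=f]) (auto simp: Gw Disj)
      next
        assume u: "\<not> derivable (add_mset b G0 + Gf) (Dw + Df)"
        have "concl (add_mset b G0) Dw Gf Df" using IH[OF _ u less.prems(2,3)] Gw Disj by simp
        then show ?thesis by (rule addX[where f=f]) (auto simp: Gw Disj)
      qed
    next
      case (Imp a b)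
      have "\<not> derivable (G0 + Gf) (add_mset a Dw + Df) \<or> \<not> derivable (add_mset b G0 + Gf) (Dw + Df)"
        using nd derivable.ImpL[of "G0 + Gf" a "Dw + Df" b] Imp by auto
      then show ?thesis
      proof
        assume u: "\<not> derivable (G0 + Gf) (add_mset a Dw + Df)"
        have "concl G0 (add_mset a Dw) Gf Df" using IH[OF _ u less.prems(2,3)] Gw Imp by simp
        then show ?thesis by (rule addX[where f=f]) (auto simp: Gw Imp)
      next
        assume u: "\<not> derivable (add_mset b G0 + Gf) (Dw + Df)"
        have "concl (add_mset b G0) Dw Gf Df" using IH[OF _ u less.prems(2,3)] Gw Imp by simp
        then show ?thesis by (rule addX[where f=f]) (auto simp: Gw Imp)
      qed
    next
      case (Neg a)
      have u: "\<not> derivable (G0 + Gf) (add_mset a Dw + Df)"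
        using nd derivable.NegL[of "G0 + Gf" a "Dw + Df"] Neg by auto
      have "concl G0 (add_mset a Dw) Gf Df" using IH[OF _ u less.prems(2,3)] Gw Neg by simp
      then show ?thesis by (rule addX[where f=f]) (auto simp: Gw Neg)
    next
      case (D G a)
      have u: "\<not> derivable (add_mset a G0 + add_mset f Gf) (Dw + Df)"
        using nd derivable.DT[of G a "G0 + Gf" "Dw + Df"] D by auto
      have "concl (add_mset a G0) Dw (add_mset f Gf) Df"
        using IH[OF _ u] less.prems(2,3) Gw D by (simp add: finL_def)
      then show ?thesis
        by (rule addX[where f=f]) (auto simp: Gw D dest: mset_subset_eqD)
    qed
  next
    case GE: True
    show ?thesis
    proof (cases "Dw = {#}")
      case True
      have "\<not> derivable Gf Df" using less.prems(1) GE True by simp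
      then have st: "satur {} {} Gf Df" unfolding satur_def using less.prems(2,3) by blast
      show ?thesis unfolding concl_def
        apply (rule exI[of _ "{}"], rule exI[of _ "{}"], rule exI[of _ Gf], rule exI[of _ Df])
        using GE True st by simp
    next
      case False
      then obtain f D0 where Dw: "Dw = add_mset f D0" by (metis multiset_cases)
      have nd: "\<not> derivable Gf (add_mset f (D0 + Df))" using less.prems(1) Dw GE by simp
      have fin: "finR f \<Longrightarrow> concl Gw Dw Gf Df"
      proof -
        assume fr: "finR f"
        have "concl Gw D0 Gf (add_mset f Df)"
          using IH[of Gw D0 Gf "add_mset f Df"] nd less.prems fr Dw GE by simp
        then show ?thesis
          using fr by (rule_tac addY[where f=f]) (auto simp: Dw finR_def dest: mset_subset_eqD)
      qed
      show ?thesis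
      proof (cases f)
        case (Var q)
        then show ?thesis by (intro fin) (auto simp: finR_def)
      next
        case Bot
        then show ?thesis by (intro fin) (auto simp: finR_def)
      next
        case (D G a)
        then show ?thesis by (intro fin) (auto simp: finR_def)
      next
        case (Conj a b)
        have "\<not> derivable Gf (add_mset a D0 + Df) \<or> \<not> derivable Gf (add_mset b D0 + Df)"
          using nd derivable.ConjR[of Gf a "D0 + Df" b] Conj by auto
        then show ?thesis
        proof
          assume u: "\<not> derivable Gf (add_mset a D0 + Df)"
          have "concl Gw (add_mset a D0) Gf Df" using IH[of Gw "add_mset a D0" Gf Df] u less.prems(2,3) GE Dw Conj by simp
          then show ?thesis by (rule addY[where f=f]) (auto simp: Dw Conj)
        next
          assume u: "\<not> derivable Gf (add_mset b D0 + Df)"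
          have "concl Gw (add_mset b D0) Gf Df" using IH[of Gw "add_mset b D0" Gf Df] u less.prems(2,3) GE Dw Conj by simp
          then show ?thesis by (rule addY[where f=f]) (auto simp: Dw Conj)
        qed
      next
        case (Disj a b)
        have u: "\<not> derivable Gf (add_mset a (add_mset b D0) + Df)"
          using nd derivable.DisjR[of Gf a b "D0 + Df"] Disj by auto
        have "concl Gw (add_mset a (add_mset b D0)) Gf Df"
          using IH[of Gw "add_mset a (add_mset b D0)" Gf Df] u less.prems(2,3) GE Dw Disj by simp
        then show ?thesis by (rule addY[where f=f]) (auto simp: Dw Disj)
      next
        case (Imp a b)
        have u: "\<not> derivable (add_mset a Gf) (add_mset b D0 + Df)"
          using nd derivable.ImpR[of a Gf b "D0 + Df"] Imp by auto
        have "concl {#a#} (add_mset b D0) Gf Df"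
          using IH[of "{#a#}" "add_mset b D0" Gf Df] u less.prems(2,3) GE Dw Imp by simp
        then show ?thesis by (rule addY[where f=f]) (auto simp: Dw Imp GE)
      next
        case (Neg a)
        have u: "\<not> derivable (add_mset a Gf) (D0 + Df)"
          using nd derivable.NegR[of a Gf "D0 + Df"] Neg by auto
        have "concl {#a#} D0 Gf Df"
          using IH[of "{#a#}" D0 Gf Df] u less.prems(2,3) GE Dw Neg by simp
        then show ?thesis by (rule addY[where f=f]) (auto simp: Dw Neg GE)
      qed
    qed
  qed
qed

definition Wc :: "(('a, 'p) fm multiset \<times> ('a, 'p) fm multiset) set" where
  "Wc = {s. \<not> derivable (fst s) (snd s)}"

definition sd :: "('a, 'p) fm multiset \<times> ('a, 'p) fm multiset \<Rightarrow>
   ('a, 'p) fm set \<times> ('a, 'p) fm set \<times> ('a, 'p) fm multiset \<times> ('a, 'p) fm multiset" where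
  "sd s = (SOME x. set_mset (fst s) \<subseteq> fst x \<and> set_mset (snd s) \<subseteq> fst (snd x) \<and> satur (fst x) (fst (snd x)) (fst (snd (snd x))) (snd (snd (snd x))))"

definition "cX s = fst (sd s)"
definition "cY s = fst (snd (sd s))"
definition "cG s = fst (snd (snd (sd s)))"
definition "cD s = snd (snd (snd (sd s)))"

lemma sd_props:
  assumes "s \<in> Wc"
  shows "set_mset (fst s) \<subseteq> cX s \<and> set_mset (snd s) \<subseteq> cY s \<and> satur (cX s) (cY s) (cG s) (cD s)"
proof -
  have "concl (fst s) (snd s) {#} {#}" using sat_ex[of "fst s" "{#}" "snd s" "{#}"] assms by (simp add: Wc_def)
  then have "\<exists>X Y Gf Df. set_mset (fst s) \<subseteq> X \<and> set_mset (snd s) \<subseteq> Y \<and> satur X Y Gf Df"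
    unfolding concl_def by blast
  then have "\<exists>x. set_mset (fst s) \<subseteq> fst x \<and> set_mset (snd s) \<subseteq> fst (snd x) \<and> satur (fst x) (fst (snd x)) (fst (snd (snd x))) (snd (snd (snd x)))"
    by auto
  from someI_ex[OF this] show ?thesis unfolding cX_def cY_def cG_def cD_def sd_def .
qed

definition boxsel :: "'a set \<Rightarrow> ('a, 'p) fm \<Rightarrow> bool" where
  "boxsel G f = (\<exists>H a. f = D H a \<and> H \<subseteq> G)"

fun unD :: "('a, 'p) fm \<Rightarrow> 'a set \<times> ('a, 'p) fm" where
  "unD (D H a) = (H, a)"
| "unD f = undefined"

definition xsof :: "('a, 'p) fm multiset \<Rightarrow> 'a set \<Rightarrow> ('a set \<times> ('a, 'p) fm) list" where
  "xsof Gf G = map unD (SOME l. mset l = filter_mset (boxsel G) Gf)"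

lemma boxes_mset: "mset (SOME l. mset l = filter_mset (boxsel G) Gf) = filter_mset (boxsel G) Gf"
  by (rule someI_ex) (rule ex_mset)

lemma map_unD: "\<forall>f\<in>set l. boxsel G f \<Longrightarrow> map ((\<lambda>(H, a). D H a) \<circ> unD) l = l"
  by (induction l) (auto simp: boxsel_def)

lemma unD_sub: "\<forall>f\<in>set l. boxsel G f \<Longrightarrow> (H, a) \<in> set (map unD l) \<Longrightarrow> H \<subseteq> G"
  by (induction l) (auto simp: boxsel_def)

lemma xsof_mset: "mset (map (\<lambda>(H, a). D H a) (xsof Gf G)) = filter_mset (boxsel G) Gf"
proof -
  let ?l = "SOME l. mset l = filter_mset (boxsel G) Gf"
  have "\<forall>f\<in>set ?l. boxsel G f"
    using boxes_mset[of G Gf] by (metis mem_Collect_eq set_mset_filter set_mset_mset)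
  then have "map ((\<lambda>(H, a). D H a) \<circ> unD) ?l = ?l"
    by (rule map_unD)
  then show ?thesis unfolding xsof_def using boxes_mset[of G Gf] by simp
qed

lemma xsof_sub: "\<forall>(H, a) \<in> set (xsof Gf G). H \<subseteq> G"
proof -
  let ?l = "SOME l. mset l = filter_mset (boxsel G) Gf"
  have "\<forall>f\<in>set ?l. boxsel G f"
    using boxes_mset[of G Gf] by (metis mem_Collect_eq set_mset_filter set_mset_mset)
  then show ?thesis unfolding xsof_def using unD_sub by blast
qed

lemma xsof_in:
  assumes "D H a \<in># Gf" "H \<subseteq> G"
  shows "a \<in># mset (map snd (xsof Gf G))"
proof -
  let ?l = "SOME l. mset l = filter_mset (boxsel G) Gf"
  have "D H a \<in> set ?l" using assms boxes_mset[of G Gf]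
    by (metis (mono_tags, lifting) boxsel_def mem_Collect_eq set_mset_filter set_mset_mset)
  then have "(H, a) \<in> set (xsof Gf G)" unfolding xsof_def by force
  then show ?thesis by force
qed

definition succ :: "('a, 'p) fm multiset \<Rightarrow> 'a set \<Rightarrow> ('a, 'p) fm \<Rightarrow> ('a, 'p) fm multiset \<times> ('a, 'p) fm multiset" where
  "succ Gf G b = (mset (map snd (xsof Gf G)), {#b#})"

definition Rc :: "'a set \<Rightarrow> ('a, 'p) fm multiset \<times> ('a, 'p) fm multiset \<Rightarrow> ('a, 'p) fm multiset \<times> ('a, 'p) fm multiset \<Rightarrow> bool" where
  "Rc G s t = (s \<in> Wc \<and> t \<in> Wc \<and> (t = s \<or> (\<exists>G' b. G \<subseteq> G' \<and> D G' b \<in># cD s \<and> t = succ (cG s) G' b)))"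

definition Vc :: "('a, 'p) fm multiset \<times> ('a, 'p) fm multiset \<Rightarrow> 'p \<Rightarrow> bool" where
  "Vc s q = (Var q \<in># cG s)"

lemma pmodel_c: "pmodel Wc Rc"
  unfolding pmodel_def Rc_def by blast

lemma succ_W:
  assumes "s \<in> Wc" "D G b \<in># cD s"
  shows "succ (cG s) G b \<in> Wc"
proof (rule ccontr)
  assume "succ (cG s) G b \<notin> Wc"
  then have d: "derivable (mset (map snd (xsof (cG s) G))) {#b#}" unfolding Wc_def succ_def by simp
  have st: "satur (cX s) (cY s) (cG s) (cD s)" using sd_props[OF assms(1)] by blast
  let ?\<Sigma> = "filter_mset (\<lambda>f. \<not> boxsel G f) (cG s)"
  let ?\<Omega> = "cD s - {#D G b#}"
  have s1: "\<forall>f\<in>#?\<Sigma>. sigma_ok G f"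
    using st unfolding satur_def finL_def sigma_ok_def boxsel_def by auto
  have s2: "\<forall>f\<in>#?\<Omega>. omega_ok f"
    using st unfolding satur_def finR_def omega_ok_def is_boxed_def by (auto dest: in_diffD)
  have "derivable (?\<Sigma> + mset (map (\<lambda>(Gi, ai). D Gi ai) (xsof (cG s) G))) (add_mset (D G b) ?\<Omega>)"
    by (rule derivable.DK[OF d xsof_sub s1 s2])
  moreover have "?\<Sigma> + mset (map (\<lambda>(Gi, ai). D Gi ai) (xsof (cG s) G)) = cG s"
    unfolding xsof_mset by (metis multiset_partition union_commute)
  moreover have "add_mset (D G b) ?\<Omega> = cD s" using assms(2) by simp
  ultimately show False using st unfolding satur_def by simp
qed

lemma truth:
  "\<forall>s\<in>Wc. (f \<in> cX s \<longrightarrow> sat Wc Rc Vc s f) \<and> (f \<in> cY s \<longrightarrow> \<not> sat Wc Rc Vc s f)"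
proof (induction f)
  case (Var q)
  show ?case
  proof (intro ballI conjI impI)
    fix s :: "('a, 'b) fm multiset \<times> ('a, 'b) fm multiset" assume s: "s \<in> Wc"
    have st: "satur (cX s) (cY s) (cG s) (cD s)" using sd_props[OF s] by blast
    { assume "Var q \<in> cX s" then show "sat Wc Rc Vc s (Var q)"
        using st unfolding satur_def Vc_def by fastforce }
    { assume y: "Var q \<in> cY s" show "\<not> sat Wc Rc Vc s (Var q)"
      proof
        assume "sat Wc Rc Vc s (Var q)"
        then have "Var q \<in># cG s" by (simp add: Vc_def)
        moreover have "Var q \<in># cD s" using y st unfolding satur_def by fastforce
        ultimately have "derivable (cG s) (cD s)"
          by (metis derivable.Ax insert_DiffM)
        then show False using st unfolding satur_def by simp
      qed }
  qed
next
  case Bot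
  then show ?case using sd_props unfolding satur_def by fastforce
next
  case (Conj f1 f2)
  then show ?case using sd_props unfolding satur_def by fastforce
next
  case (Disj f1 f2)
  then show ?case using sd_props unfolding satur_def by fastforce
next
  case (Imp f1 f2)
  then show ?case using sd_props unfolding satur_def by fastforce
next
  case (Neg f1)
  then show ?case using sd_props unfolding satur_def by fastforce
next
  case (D G f1)
  show ?case
  proof (intro ballI conjI impI)
    fix s :: "('a, 'b) fm multiset \<times> ('a, 'b) fm multiset" assume s: "s \<in> Wc"
    have st: "satur (cX s) (cY s) (cG s) (cD s)" using sd_props[OF s] by blast
    { assume x: "D G f1 \<in> cX s"
      have c: "f1 \<in> cX s" "D G f1 \<in># cG s" using x st unfolding satur_def by fastforce+
      show "sat Wc Rc Vc s (D G f1)"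
        unfolding sat.simps
      proof (intro ballI impI)
        fix t assume t: "t \<in> Wc" "Rc G s t"
        then consider "t = s" | G' b where "G \<subseteq> G'" "t = succ (cG s) G' b" unfolding Rc_def by blast
        then show "sat Wc Rc Vc t f1"
        proof cases
          case 1 then show ?thesis using D.IH s c by blast
        next
          case 2
          have "f1 \<in># fst t" using xsof_in[OF c(2) 2(1)] 2(2) by (simp add: succ_def)
          then have "f1 \<in> cX t" using sd_props[OF t(1)] by blast
          then show ?thesis using D.IH t(1) by blast
        qed
      qed }
    { assume y: "D G f1 \<in> cY s"
      have c: "D G f1 \<in># cD s" using y st unfolding satur_def by fastforce
      let ?t = "succ (cG s) G f1"
      have tW: "?t \<in> Wc" by (rule succ_W[OF s c])
      have r: "Rc G s ?t" unfolding Rc_def using s tW c by blast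
      have "f1 \<in> cY ?t" using sd_props[OF tW] by (simp add: succ_def)
      then have "\<not> sat Wc Rc Vc ?t f1" using D.IH tW by blast
      then show "\<not> sat Wc Rc Vc s (D G f1)" using r tW by auto }
  qed
qed

lemma completeness:
  assumes "\<not> derivable \<Gamma> \<Delta>"
  shows "(\<Gamma>, \<Delta>) \<in> Wc \<and> (\<forall>f\<in>#\<Gamma>. sat Wc Rc Vc (\<Gamma>, \<Delta>) f) \<and> (\<forall>f\<in>#\<Delta>. \<not> sat Wc Rc Vc (\<Gamma>, \<Delta>) f)"
proof -
  have w: "(\<Gamma>, \<Delta>) \<in> Wc" using assms by (simp add: Wc_def)
  show ?thesis using w sd_props[OF w] truth by fastforce
qed

fun BigConj :: "('a, 'p) fm list \<Rightarrow> ('a, 'p) fm" where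
  "BigConj [] = Neg Bot"
| "BigConj (x # xs) = Conj x (BigConj xs)"

fun BigDisj :: "('a, 'p) fm list \<Rightarrow> ('a, 'p) fm" where
  "BigDisj [] = Bot"
| "BigDisj (x # xs) = Disj x (BigDisj xs)"

lemma sat_BigConj[simp]: "sat W R V w (BigConj xs) = (\<forall>x\<in>set xs. sat W R V w x)"
  by (induction xs) auto
lemma sat_BigDisj[simp]: "sat W R V w (BigDisj xs) = (\<exists>x\<in>set xs. sat W R V w x)"
  by (induction xs) auto
lemma wff_BigConj[simp]: "wff (BigConj xs) = (\<forall>x\<in>set xs. wff x)"
  by (induction xs) auto
lemma wff_BigDisj[simp]: "wff (BigDisj xs) = (\<forall>x\<in>set xs. wff x)"
  by (induction xs) auto
lemma vars_BigConj[simp]: "vars (BigConj xs) = (\<Union>x\<in>set xs. vars x)"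
  by (induction xs) auto
lemma vars_BigDisj[simp]: "vars (BigDisj xs) = (\<Union>x\<in>set xs. vars x)"
  by (induction xs) auto
lemma agts_BigConj[simp]: "agts (BigConj xs) = (\<Union>x\<in>set xs. agts x)"
  by (induction xs) auto
lemma agts_BigDisj[simp]: "agts (BigDisj xs) = (\<Union>x\<in>set xs. agts x)"
  by (induction xs) auto

definition lst :: "'b set \<Rightarrow> 'b list" where
  "lst S = (SOME xs. set xs = S)"

lemma set_lst[simp]: "finite S \<Longrightarrow> set (lst S) = S"
  unfolding lst_def by (rule someI_ex) (rule finite_list)

definition dia :: "'a set \<Rightarrow> ('a, 'p) fm \<Rightarrow> ('a, 'p) fm" where
  "dia H x = Neg (D H (Neg x))"

definition lit :: "'p set \<Rightarrow> 'p set \<Rightarrow> ('a, 'p) fm" where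
  "lit L S = BigConj (map (\<lambda>q. if q \<in> S then Var q else Neg (Var q)) (lst L))"

definition mk :: "'p set \<Rightarrow> 'a set set \<Rightarrow> 'p set \<Rightarrow> ('a set \<times> ('a, 'p) fm) set \<Rightarrow> ('a, 'p) fm" where
  "mk L Cg S T = Conj (lit L S) (BigConj (map (\<lambda>H. Conj (BigConj (map (dia H) (lst (T `` {H})))) (D H (BigDisj (lst (T `` {H}))))) (lst Cg)))"

fun Ch :: "'p set \<Rightarrow> 'a set set \<Rightarrow> nat \<Rightarrow> ('a, 'p) fm set" where
  "Ch L Cg 0 = lit L ` Pow L"
| "Ch L Cg (Suc k) = (\<lambda>(S, T). mk L Cg S T) ` (Pow L \<times> Pow (Cg \<times> Ch L Cg k))"

fun chr :: "'p set \<Rightarrow> 'a set set \<Rightarrow> 'w set \<Rightarrow> ('a set \<Rightarrow> 'w \<Rightarrow> 'w \<Rightarrow> bool) \<Rightarrow> ('w \<Rightarrow> 'p \<Rightarrow> bool) \<Rightarrow> nat \<Rightarrow> 'w \<Rightarrow> ('a, 'p) fm" where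
  "chr L Cg W R V 0 w = lit L {q \<in> L. V w q}"
| "chr L Cg W R V (Suc k) w = mk L Cg {q \<in> L. V w q} {(H, x). H \<in> Cg \<and> (\<exists>v. x = chr L Cg W R V k v \<and> v \<in> W \<and> R H w v)}"

fun bis :: "'p set \<Rightarrow> 'a set set \<Rightarrow> 'w set \<Rightarrow> ('a set \<Rightarrow> 'w \<Rightarrow> 'w \<Rightarrow> bool) \<Rightarrow> ('w \<Rightarrow> 'p \<Rightarrow> bool)
   \<Rightarrow> 'v set \<Rightarrow> ('a set \<Rightarrow> 'v \<Rightarrow> 'v \<Rightarrow> bool) \<Rightarrow> ('v \<Rightarrow> 'p \<Rightarrow> bool) \<Rightarrow> nat \<Rightarrow> 'w \<Rightarrow> 'v \<Rightarrow> bool" where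
  "bis L Cg W R V W' R' V' 0 w w' = (\<forall>q\<in>L. V w q = V' w' q)"
| "bis L Cg W R V W' R' V' (Suc k) w w' = ((\<forall>q\<in>L. V w q = V' w' q) \<and>
     (\<forall>H\<in>Cg. (\<forall>v\<in>W. R H w v \<longrightarrow> (\<exists>v'\<in>W'. R' H w' v' \<and> bis L Cg W R V W' R' V' k v v'))
            \<and> (\<forall>v'\<in>W'. R' H w' v' \<longrightarrow> (\<exists>v\<in>W. R H w v \<and> bis L Cg W R V W' R' V' k v v'))))"

lemma bis_0: "bis L Cg W R V W' R' V' k w w' \<Longrightarrow> q \<in> L \<Longrightarrow> V w q = V' w' q"
  by (cases k) auto

lemma bis_refl: "bis L Cg W R V W R V k w w"
  by (induction k arbitrary: w) auto

lemma finite_Ch: "finite L \<Longrightarrow> finite Cg \<Longrightarrow> finite (Ch L Cg k)"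
  by (induction k) auto

lemma chr_Ch: "chr L Cg W R V k w \<in> Ch L Cg k"
proof (induction k arbitrary: w)
  case 0
  then show ?case by auto
next
  case (Suc k)
  have "\<forall>v. chr L Cg W R V k v \<in> Ch L Cg k" using Suc.IH by blast
  then have "{(H, x). H \<in> Cg \<and> (\<exists>v. x = chr L Cg W R V k v \<and> v \<in> W \<and> R H w v)} \<in> Pow (Cg \<times> Ch L Cg k)"
    by blast
  then show ?case unfolding chr.simps Ch.simps
    by (intro image_eqI[where x = "({q \<in> L. V w q}, {(H, x). H \<in> Cg \<and> (\<exists>v. x = chr L Cg W R V k v \<and> v \<in> W \<and> R H w v)})"]) auto
qed

lemma sat_lit:
  assumes "finite L"
  shows "sat W R V w (lit L S) = (\<forall>q\<in>L. V w q = (q \<in> S))"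
proof -
  have "sat W R V w (lit L S) = (\<forall>x\<in>(\<lambda>q. if q \<in> S then Var q else Neg (Var q)) ` L. sat W R V w x)"
    unfolding lit_def sat_BigConj set_map set_lst[OF assms] ..
  also have "\<dots> = (\<forall>q\<in>L. sat W R V w (if q \<in> S then Var q else Neg (Var q)))"
    by blast
  also have "\<dots> = (\<forall>q\<in>L. V w q = (q \<in> S))"
    by (intro ball_cong refl) auto
  finally show ?thesis .
qed

lemma Ch_props:
  assumes "finite L" "finite Cg" "{} \<notin> Cg"
  shows "\<forall>x\<in>Ch L Cg k. wff x \<and> vars x \<subseteq> L \<and> agts x \<subseteq> \<Union>Cg"
proof (induction k)
  case 0
  then show ?case using assms by (auto simp: lit_def)
next
  case (Suc k)
  show ?case
  proof
    fix x assume "x \<in> Ch L Cg (Suc k)"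
    then obtain S T where x: "x = mk L Cg S T" "S \<subseteq> L" "T \<subseteq> Cg \<times> Ch L Cg k" by auto
    have TS: "\<And>H y. y \<in> T `` {H} \<Longrightarrow> y \<in> Ch L Cg k" using x(3) by blast
    have fT: "\<And>H. finite (T `` {H})"
      using TS finite_Ch[OF assms(1,2), of k] by (meson finite_subset subsetI)
    have lp: "wff (lit L S')" "vars (lit L S') \<subseteq> L" "agts (lit L S') = {}" for S'
      using assms(1) by (auto simp: lit_def)
    have hp: "wff y \<and> vars y \<subseteq> L \<and> agts y \<subseteq> \<Union>Cg" if "H \<in> Cg" "y \<in> set (lst (T `` {H}))" for H y
      using Suc.IH TS that fT by auto
    have hne: "H \<in> Cg \<Longrightarrow> H \<noteq> {}" for H using assms(3) by auto
    show "wff x \<and> vars x \<subseteq> L \<and> agts x \<subseteq> \<Union>Cg"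
    proof (intro conjI)
      show "wff x" unfolding x(1) mk_def using lp hp hne assms(2) by (simp add: dia_def)
      show "vars x \<subseteq> L" unfolding x(1) mk_def using lp hp assms(2)
        by (simp add: dia_def UN_subset_iff)
      show "agts x \<subseteq> \<Union>Cg" unfolding x(1) mk_def using lp hp assms(2)
        by (simp add: dia_def UN_subset_iff Sup_upper lp(3))
    qed
  qed
qed

lemma chr_sat:
  assumes "finite L" "finite Cg" "w \<in> W" "w' \<in> W'"
  shows "sat W' R' V' w' (chr L Cg W R V k w) = bis L Cg W R V W' R' V' k w w'"
  using assms(3,4)
proof (induction k arbitrary: w w')
  case 0
  then show ?case unfolding chr.simps bis.simps sat_lit[OF assms(1)] by auto
next
  case (Suc k)
  define T' where "T' H = {chr L Cg W R V k v | v. v \<in> W \<and> R H w v}" for H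
  have fT: "finite (T' H)" for H
  proof -
    have "T' H \<subseteq> Ch L Cg k" using chr_Ch unfolding T'_def by auto
    then show "finite (T' H)" using finite_Ch[OF assms(1,2)] finite_subset by blast
  qed
  have lit: "sat W' R' V' w' (lit L {q \<in> L. V w q}) = (\<forall>q\<in>L. V w q = V' w' q)"
    unfolding sat_lit[OF assms(1)] by auto
  have "sat W' R' V' w' (chr L Cg W R V (Suc k) w) =
     (sat W' R' V' w' (lit L {q \<in> L. V w q}) \<and> (\<forall>H\<in>Cg. (\<forall>x\<in>set (lst (T' H)). sat W' R' V' w' (dia H x))
        \<and> sat W' R' V' w' (D H (BigDisj (lst (T' H))))))"
  proof -
    let ?Tr = "{(H, x). H \<in> Cg \<and> (\<exists>v. x = chr L Cg W R V k v \<and> v \<in> W \<and> R H w v)}"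
    have "H \<in> Cg \<Longrightarrow> ?Tr `` {H} = T' H" for H unfolding T'_def by blast
    then have "map (\<lambda>H. Conj (BigConj (map (dia H) (lst (?Tr `` {H})))) (D H (BigDisj (lst (?Tr `` {H}))))) (lst Cg)
        = map (\<lambda>H. Conj (BigConj (map (dia H) (lst (T' H)))) (D H (BigDisj (lst (T' H))))) (lst Cg)"
      using assms(2) by (intro map_cong refl) simp
    then show ?thesis using assms(2) unfolding chr.simps mk_def
      by (simp del: sat.simps(7) add: sat.simps(3))
  qed
  also have "\<dots> = ((\<forall>q\<in>L. V w q = V' w' q) \<and> (\<forall>H\<in>Cg. (\<forall>v\<in>W. R H w v \<longrightarrow> (\<exists>v'\<in>W'. R' H w' v' \<and> bis L Cg W R V W' R' V' k v v'))
            \<and> (\<forall>v'\<in>W'. R' H w' v' \<longrightarrow> (\<exists>v\<in>W. R H w v \<and> bis L Cg W R V W' R' V' k v v'))))"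
    unfolding lit
  proof (rule conj_cong[OF refl], rule ball_cong[OF refl])
    fix H assume H: "H \<in> Cg"
    have e1: "(\<forall>x\<in>set (lst (T' H)). sat W' R' V' w' (dia H x)) = (\<forall>v\<in>W. R H w v \<longrightarrow> (\<exists>v'\<in>W'. R' H w' v' \<and> bis L Cg W R V W' R' V' k v v'))"
    proof -
      have "(\<forall>x\<in>set (lst (T' H)). sat W' R' V' w' (dia H x)) = (\<forall>v\<in>W. R H w v \<longrightarrow> sat W' R' V' w' (dia H (chr L Cg W R V k v)))"
        unfolding set_lst[OF fT] unfolding T'_def by blast
      also have "\<dots> = (\<forall>v\<in>W. R H w v \<longrightarrow> (\<exists>v'\<in>W'. R' H w' v' \<and> sat W' R' V' v' (chr L Cg W R V k v)))"
        by (simp add: dia_def)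
      also have "\<dots> = (\<forall>v\<in>W. R H w v \<longrightarrow> (\<exists>v'\<in>W'. R' H w' v' \<and> bis L Cg W R V W' R' V' k v v'))"
        using Suc.IH by (meson)
      finally show ?thesis .
    qed
    have e2: "sat W' R' V' w' (D H (BigDisj (lst (T' H)))) = (\<forall>v'\<in>W'. R' H w' v' \<longrightarrow> (\<exists>v\<in>W. R H w v \<and> bis L Cg W R V W' R' V' k v v'))"
    proof -
      have "sat W' R' V' w' (D H (BigDisj (lst (T' H)))) = (\<forall>v'\<in>W'. R' H w' v' \<longrightarrow> (\<exists>x\<in>T' H. sat W' R' V' v' x))"
        using fT by simp
      also have "\<dots> = (\<forall>v'\<in>W'. R' H w' v' \<longrightarrow> (\<exists>v\<in>W. R H w v \<and> sat W' R' V' v' (chr L Cg W R V k v)))"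
        unfolding T'_def by blast
      also have "\<dots> = (\<forall>v'\<in>W'. R' H w' v' \<longrightarrow> (\<exists>v\<in>W. R H w v \<and> bis L Cg W R V W' R' V' k v v'))"
        using Suc.IH by (meson)
      finally show ?thesis .
    qed
    show "((\<forall>x\<in>set (lst (T' H)). sat W' R' V' w' (dia H x)) \<and> sat W' R' V' w' (D H (BigDisj (lst (T' H))))) =
      ((\<forall>v\<in>W. R H w v \<longrightarrow> (\<exists>v'\<in>W'. R' H w' v' \<and> bis L Cg W R V W' R' V' k v v'))
            \<and> (\<forall>v'\<in>W'. R' H w' v' \<longrightarrow> (\<exists>v\<in>W. R H w v \<and> bis L Cg W R V W' R' V' k v v')))"
      using e1 e2 by simp
  qed
  finally show ?case by simp
qed

fun depth :: "('a, 'p) fm \<Rightarrow> nat" where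
  "depth (Var q) = 0"
| "depth Bot = 0"
| "depth (Conj x y) = max (depth x) (depth y)"
| "depth (Disj x y) = max (depth x) (depth y)"
| "depth (Imp x y) = max (depth x) (depth y)"
| "depth (Neg x) = depth x"
| "depth (D G x) = Suc (depth x)"

locale amal =
  fixes W :: "'w set" and R :: "'a set \<Rightarrow> 'w \<Rightarrow> 'w \<Rightarrow> bool" and V :: "'w \<Rightarrow> 'p \<Rightarrow> bool"
    and W' :: "'v set" and R' :: "'a set \<Rightarrow> 'v \<Rightarrow> 'v \<Rightarrow> bool" and V' :: "'v \<Rightarrow> 'p \<Rightarrow> bool"
    and L :: "'p set" and Cg :: "'a set set" and Vp :: "'p set" and Ap :: "'a set" and p :: 'p and a :: 'a
  assumes pm: "pmodel W R" and pm': "pmodel W' R'"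
    and L: "L = Vp - {p}" and Cg: "Cg = {H. H \<noteq> {} \<and> H \<subseteq> Ap - {a}}"
begin

definition W2 :: "('w option \<times> ('v \<times> nat) option) set" where
  "W2 = {x. case x of (Some u, Some (u', k)) \<Rightarrow> u \<in> W \<and> u' \<in> W' \<and> bis L Cg W R V W' R' V' k u u'
                    | (Some u, None) \<Rightarrow> u \<in> W | (None, Some (u', k)) \<Rightarrow> u' \<in> W' | (None, None) \<Rightarrow> False}"

definition psc :: "'a set \<Rightarrow> ('w option \<times> ('v \<times> nat) option) \<Rightarrow> ('w option \<times> ('v \<times> nat) option) \<Rightarrow> bool" where
  "psc G x y = (case (fst x, fst y) of (Some u, Some v) \<Rightarrow> R (G - {a}) u v | (None, None) \<Rightarrow> True
                 | (Some u, None) \<Rightarrow> G - {a} = {} | (None, Some v) \<Rightarrow> False)"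

definition phc :: "'a set \<Rightarrow> ('w option \<times> ('v \<times> nat) option) \<Rightarrow> ('w option \<times> ('v \<times> nat) option) \<Rightarrow> bool" where
  "phc G x y = (G \<inter> Ap = {} \<or> (case snd x of None \<Rightarrow> snd y = None
      | Some (u', k) \<Rightarrow> k = 0 \<or> snd y = snd x \<or> (\<exists>v'. snd y = Some (v', k - 1) \<and> R' (G \<inter> Ap) u' v')))"

definition R2 :: "'a set \<Rightarrow> ('w option \<times> ('v \<times> nat) option) \<Rightarrow> ('w option \<times> ('v \<times> nat) option) \<Rightarrow> bool" where
  "R2 G x y = (x \<in> W2 \<and> y \<in> W2 \<and> psc G x y \<and> phc G x y)"

definition V2 :: "('w option \<times> ('v \<times> nat) option) \<Rightarrow> 'p \<Rightarrow> bool" where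
  "V2 x q = (case snd x of Some (u', k) \<Rightarrow> (if q \<in> Vp then V' u' q else (case fst x of Some u \<Rightarrow> V u q | None \<Rightarrow> False))
             | None \<Rightarrow> (case fst x of Some u \<Rightarrow> V u q | None \<Rightarrow> False))"

lemma refl_R: "u \<in> W \<Longrightarrow> R G u u" using pm unfolding pmodel_def by blast
lemma anti_R: "G \<subseteq> G' \<Longrightarrow> R G' u v \<Longrightarrow> R G u v" using pm unfolding pmodel_def by blast
lemma refl_R': "u \<in> W' \<Longrightarrow> R' G u u" using pm' unfolding pmodel_def by blast
lemma anti_R': "G \<subseteq> G' \<Longrightarrow> R' G' u v \<Longrightarrow> R' G u v" using pm' unfolding pmodel_def by blast

lemma W2_SS: "(Some u, Some (u', k)) \<in> W2 \<longleftrightarrow> u \<in> W \<and> u' \<in> W' \<and> bis L Cg W R V W' R' V' k u u'"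
  by (simp add: W2_def)
lemma W2_SN: "(Some u, None) \<in> W2 \<longleftrightarrow> u \<in> W"
  by (simp add: W2_def)
lemma W2_NS: "(None, Some (u', k)) \<in> W2 \<longleftrightarrow> u' \<in> W'"
  by (simp add: W2_def)
lemma W2_NN: "(None, None) \<notin> W2"
  by (simp add: W2_def)

lemma W2_snd: "x \<in> W2 \<Longrightarrow> snd x = Some (u', k) \<Longrightarrow> u' \<in> W'"
  by (cases x; cases "fst x") (auto simp: W2_def)

lemma pmodel2: "pmodel W2 R2"
  unfolding pmodel_def
proof (intro conjI allI impI)
  fix G x assume x: "x \<in> W2"
  obtain o1 o2 where xo: "x = (o1, o2)" by fastforce
  have "psc G x x" using x refl_R unfolding psc_def xo W2_def
    by (auto split: option.splits)
  moreover have "phc G x x" unfolding phc_def by (auto split: option.splits)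
  ultimately show "R2 G x x" using x unfolding R2_def by blast
next
  fix G G' x y assume g: "G \<subseteq> G'" and r: "R2 G' x y"
  have "psc G x y" using r g anti_R[of "G - {a}" "G' - {a}"] unfolding R2_def psc_def
    by (auto split: option.splits)
  moreover have "phc G x y"
  proof -
    have s: "G \<inter> Ap \<subseteq> G' \<inter> Ap" using g by blast
    show ?thesis using r s anti_R'[OF s] unfolding R2_def phc_def
      by (auto split: option.splits)
  qed
  ultimately show "R2 G x y" using r unfolding R2_def by blast
qed

lemma forth_psi:
  assumes x: "x \<in> W2" "fst x = Some u" and a: "a \<notin> G" and v: "v \<in> W" "R G u v"
  shows "\<exists>y\<in>W2. R2 G x y \<and> fst y = Some v"
proof (cases "snd x")
  case None
  let ?y = "(Some v, None :: ('v \<times> nat) option)"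
  have "?y \<in> W2" using v by (simp add: W2_def)
  moreover have "psc G x ?y" using x v a by (simp add: psc_def)
  moreover have "phc G x ?y" using None by (simp add: phc_def)
  ultimately show ?thesis using x unfolding R2_def by auto
next
  case (Some z)
  then obtain u' k where z: "snd x = Some (u', k)" by (cases z) auto
  have xx: "x = (Some u, Some (u', k))" using x z by (simp add: prod_eq_iff)
  show ?thesis
  proof (cases "G \<inter> Ap = {} \<or> k = 0")
    case True
    let ?y = "(Some v, None :: ('v \<times> nat) option)"
    have "?y \<in> W2" using v by (simp add: W2_def)
    moreover have "psc G x ?y" using x v a by (simp add: psc_def)
    moreover have "phc G x ?y" using True z by (auto simp: phc_def)
    ultimately show ?thesis using x unfolding R2_def by auto
  next
    case False
    then obtain m where k: "k = Suc m" by (cases k) auto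
    let ?H = "G \<inter> Ap"
    have H: "?H \<in> Cg" using False a Cg by auto
    have b: "bis L Cg W R V W' R' V' (Suc m) u u'" using x(1) xx k W2_SS by simp
    have rh: "R ?H u v" using anti_R[OF _ v(2)] by blast
    have "\<exists>v'\<in>W'. R' ?H u' v' \<and> bis L Cg W R V W' R' V' m v v'"
      using b H v(1) rh unfolding bis.simps by blast
    then obtain v' where v': "v' \<in> W'" "R' ?H u' v'" "bis L Cg W R V W' R' V' m v v'"
      by blast
    let ?y = "(Some v, Some (v', m))"
    have "?y \<in> W2" using v v' by (simp add: W2_def)
    moreover have "psc G x ?y" using xx v a by (simp add: psc_def)
    moreover have "phc G x ?y" using z k v' by (auto simp: phc_def)
    ultimately show ?thesis using x unfolding R2_def by auto
  qed
qed

lemma psi_side: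
  "wff f \<Longrightarrow> p \<notin> vars f \<Longrightarrow> a \<notin> agts f \<Longrightarrow> x \<in> W2 \<Longrightarrow> fst x = Some u \<Longrightarrow>
   sat W2 R2 V2 x f = sat W R V u f"
proof (induction f arbitrary: x u)
  case (Var q)
  show ?case
  proof (cases "snd x")
    case None
    then show ?thesis using Var by (simp add: V2_def)
  next
    case (Some z)
    then obtain u' k where z: "snd x = Some (u', k)" by (cases z) auto
    have xx: "x = (Some u, Some (u', k))" using Var z by (simp add: prod_eq_iff)
    have b: "bis L Cg W R V W' R' V' k u u'" using Var(4) xx W2_SS by simp
    show ?thesis
    proof (cases "q \<in> Vp")
      case True
      then have "q \<in> L" using L Var(2) by simp
      then show ?thesis using bis_0[OF b] True xx by (simp add: V2_def)
    next
      case False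
      then show ?thesis using xx by (simp add: V2_def)
    qed
  qed
next
  case (D G f)
  have G: "G \<noteq> {}" "a \<notin> G" and f: "wff f" "p \<notin> vars f" "a \<notin> agts f" using D.prems by auto
  show ?case
  proof
    assume h2: "sat W2 R2 V2 x (D G f)"
    show "sat W R V u (D G f)"
    proof (unfold sat.simps, intro ballI impI)
      fix v assume v: "v \<in> W" "R G u v"
      obtain y where y: "y \<in> W2" "R2 G x y" "fst y = Some v"
        using forth_psi[OF D.prems(4,5) G(2) v] by blast
      then have "sat W2 R2 V2 y f" using h2 by simp
      then show "sat W R V v f" using D.IH[OF f y(1,3)] by simp
    qed
  next
    assume h: "sat W R V u (D G f)"
    show "sat W2 R2 V2 x (D G f)"
    proof (unfold sat.simps, intro ballI impI)
      fix y assume y: "y \<in> W2" "R2 G x y"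
      have ps: "psc G x y" using y unfolding R2_def by blast
      obtain v where fy: "fst y = Some v"
      proof (cases "fst y")
        case None
        then have "G - {a} = {}" using ps D.prems(5) by (simp add: psc_def)
        then show ?thesis using G by blast
      qed auto
      have "R (G - {a}) u v" using ps fy D.prems(5) by (simp add: psc_def)
      then have rv: "R G u v" using G(2) by simp
      have vW: "v \<in> W" using y(1) fy by (cases y; cases "snd y") (auto simp: W2_def)
      have "sat W R V v f" using h rv vW by simp
      then show "sat W2 R2 V2 y f" using D.IH[OF f y(1) fy] by simp
    qed
  qed
qed auto

lemma forth_phi:
  assumes x: "x \<in> W2" "snd x = Some (u', Suc m)" and G: "G \<noteq> {}" "G \<subseteq> Ap"
    and v: "v' \<in> W'" "R' G u' v'"
  shows "\<exists>y\<in>W2. R2 G x y \<and> snd y = Some (v', m)"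
proof -
  have GA: "G \<inter> Ap = G" using G by blast
  have ph: "phc G x y" if "snd y = Some (v', m)" for y
    using x(2) that v GA by (simp add: phc_def)
  show ?thesis
  proof (cases "fst x")
    case None
    let ?y = "(None :: 'w option, Some (v', m))"
    have "?y \<in> W2" using v by (simp add: W2_def)
    moreover have "psc G x ?y" using None by (simp add: psc_def)
    ultimately show ?thesis using x ph[of ?y] unfolding R2_def by auto
  next
    case (Some u)
    have xx: "x = (Some u, Some (u', Suc m))" using x Some by (simp add: prod_eq_iff)
    have b: "bis L Cg W R V W' R' V' (Suc m) u u'" using x(1) xx W2_SS by simp
    show ?thesis
    proof (cases "G - {a} = {}")
      case True
      let ?y = "(None :: 'w option, Some (v', m))"
      have "?y \<in> W2" using v by (simp add: W2_def)
      moreover have "psc G x ?y" using Some True by (simp add: psc_def)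
      ultimately show ?thesis using x ph[of ?y] unfolding R2_def by auto
    next
      case False
      have G0: "G - {a} \<in> Cg" using False G Cg by auto
      have rh: "R' (G - {a}) u' v'" using anti_R'[OF _ v(2)] by blast
      have "\<exists>w\<in>W. R (G - {a}) u w \<and> bis L Cg W R V W' R' V' m w v'"
        using b G0 v(1) rh unfolding bis.simps by blast
      then obtain w where w: "w \<in> W" "R (G - {a}) u w" "bis L Cg W R V W' R' V' m w v'"
        by blast
      let ?y = "(Some w, Some (v', m))"
      have "?y \<in> W2" using v w by (simp add: W2_def)
      moreover have "psc G x ?y" using Some w by (simp add: psc_def)
      ultimately show ?thesis using x ph[of ?y] unfolding R2_def by auto
    qed
  qed
qed

lemma phi_side:
  "wff f \<Longrightarrow> vars f \<subseteq> Vp \<Longrightarrow> agts f \<subseteq> Ap \<Longrightarrow> depth f \<le> j \<Longrightarrow> x \<in> W2 \<Longrightarrow> snd x = Some (u', k) \<Longrightarrow> j \<le> k \<Longrightarrow>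
   sat W2 R2 V2 x f = sat W' R' V' u' f"
proof (induction f arbitrary: x u' k j)
  case (Var q)
  then show ?case by (simp add: V2_def)
next
  case (D G f)
  have G: "G \<noteq> {}" "G \<subseteq> Ap" and f: "wff f" "vars f \<subseteq> Vp" "agts f \<subseteq> Ap" using D.prems by auto
  obtain m where k: "k = Suc m" using D.prems(4,7) by (cases k) auto
  have dj: "depth f \<le> j - 1" "j - 1 \<le> m" using D.prems(4,7) k by auto
  have u'W: "u' \<in> W'" using W2_snd[OF D.prems(5,6)] .
  show ?case
  proof
    assume h2: "sat W2 R2 V2 x (D G f)"
    show "sat W' R' V' u' (D G f)"
    proof (unfold sat.simps, intro ballI impI)
      fix v' assume v: "v' \<in> W'" "R' G u' v'"
      obtain y where y: "y \<in> W2" "R2 G x y" "snd y = Some (v', m)"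
        using forth_phi[OF D.prems(5) _ G v] D.prems(6) k by blast
      then have "sat W2 R2 V2 y f" using h2 by simp
      then show "sat W' R' V' v' f" using D.IH[OF f dj(1) y(1,3) dj(2)] by simp
    qed
  next
    assume h: "sat W' R' V' u' (D G f)"
    show "sat W2 R2 V2 x (D G f)"
    proof (unfold sat.simps, intro ballI impI)
      fix y assume y: "y \<in> W2" "R2 G x y"
      have "phc G x y" using y unfolding R2_def by blast
      then have "snd y = snd x \<or> (\<exists>v'. snd y = Some (v', m) \<and> R' G u' v')"
        using G D.prems(6) k unfolding phc_def by (simp add: Int_absorb2)
      then show "sat W2 R2 V2 y f"
      proof
        assume "snd y = snd x"
        then have sy: "snd y = Some (u', k)" using D.prems(6) by simp
        have "sat W' R' V' u' f" using h u'W refl_R' by simp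
        then show ?thesis using D.IH[OF f dj(1) y(1) sy] dj k by simp
      next
        assume "\<exists>v'. snd y = Some (v', m) \<and> R' G u' v'"
        then obtain v' where sy: "snd y = Some (v', m)" "R' G u' v'" by blast
        have "v' \<in> W'" using W2_snd[OF y(1) sy(1)] .
        then have "sat W' R' V' v' f" using h sy(2) by simp
        then show ?thesis using D.IH[OF f dj(1) y(1) sy(1) dj(2)] by simp
      qed
    qed
  qed
qed auto

end

lemma finite_vars: "finite (vars f)"
  by (induction f) auto

lemma finite_mvars: "finite (mvars M)"
  by (simp add: mvars_def finite_vars)

lemma sat_BigDisj_lst: "finite G \<Longrightarrow> sat W R V w (BigDisj (lst G)) = (\<exists>x\<in>G. sat W R V w x)"
  by simp

lemma depth_le: "f \<in># M \<Longrightarrow> depth f \<le> sum_mset (image_mset depth M)"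
proof (induction M)
  case empty then show ?case by simp
next
  case (add x M) then show ?case by auto
qed

theorem corollary6p19:
  fixes \<Gamma> \<Delta> :: "('ag :: finite, 'p :: countable) fm multiset"
    and p :: 'p and a :: 'ag
  assumes "\<forall>B \<in># \<Gamma> + \<Delta>. wff B"
  shows "\<exists>A. wff A
    \<and> vars A \<subseteq> mvars (\<Gamma> + \<Delta>) - {p}
    \<and> agts A \<subseteq> magts (\<Gamma> + \<Delta>) - {a}
    \<and> derivable (add_mset A \<Gamma>) \<Delta>
    \<and> (\<forall>\<Pi> \<Lambda>. (\<forall>B \<in># \<Pi> + \<Lambda>. wff B) \<longrightarrow>
          p \<notin> mvars (\<Pi> + \<Lambda>) \<longrightarrow> a \<notin> magts (\<Pi> + \<Lambda>) \<longrightarrow>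
          derivable (\<Pi> + \<Gamma>) (\<Delta> + \<Lambda>) \<longrightarrow> derivable \<Pi> (add_mset A \<Lambda>))"
proof -
  define Vp where "Vp = mvars (\<Gamma> + \<Delta>)"
  define Ap where "Ap = magts (\<Gamma> + \<Delta>)"
  define L where "L = Vp - {p}"
  define Cg where "Cg = {H. H \<noteq> {} \<and> H \<subseteq> Ap - {a}}"
  define n where "n = sum_mset (image_mset depth (\<Gamma> + \<Delta>))"
  define Good where "Good = {\<chi> \<in> Ch L Cg n. \<forall>(W :: (('ag, 'p) fm multiset \<times> ('ag, 'p) fm multiset) set) R V w.
     pmodel W R \<longrightarrow> w \<in> W \<longrightarrow> sat W R V w \<chi> \<longrightarrow> (\<forall>f\<in>#\<Gamma>. sat W R V w f) \<longrightarrow> (\<exists>f\<in>#\<Delta>. sat W R V w f)}"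
  define A where "A = BigDisj (lst Good)"
  have fL: "finite L" unfolding L_def Vp_def using finite_mvars by blast
  have fCg: "finite Cg" by simp
  have neCg: "{} \<notin> Cg" unfolding Cg_def by blast
  have fG: "finite Good" unfolding Good_def using finite_Ch[OF fL fCg] by simp
  have sG: "set (lst Good) = Good" using fG by simp
  have GCh: "Good \<subseteq> Ch L Cg n" unfolding Good_def by blast
  have props: "\<forall>x\<in>Ch L Cg n. wff x \<and> vars x \<subseteq> L \<and> agts x \<subseteq> \<Union>Cg"
    by (rule Ch_props[OF fL fCg neCg])
  have pw: "wff x" "vars x \<subseteq> L" "agts x \<subseteq> \<Union>Cg" if "x \<in> Good" for x
    using props GCh that by blast+
  have i1: "wff A" unfolding A_def wff_BigDisj sG using pw(1) by blast
  have i2: "vars A \<subseteq> mvars (\<Gamma> + \<Delta>) - {p}" unfolding A_def vars_BigDisj sG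
    using pw(2) unfolding L_def Vp_def by blast
  have i3: "agts A \<subseteq> magts (\<Gamma> + \<Delta>) - {a}"
  proof -
    have "\<Union>Cg \<subseteq> magts (\<Gamma> + \<Delta>) - {a}" unfolding Cg_def Ap_def by blast
    then show ?thesis unfolding A_def agts_BigDisj sG using pw(3) by blast
  qed
  have sA: "sat W R V w A = (\<exists>x\<in>Good. sat W R V w x)"
    for W :: "(('ag, 'p) fm multiset \<times> ('ag, 'p) fm multiset) set" and R V w
    unfolding A_def by (rule sat_BigDisj_lst[OF fG])
  have ii: "derivable (add_mset A \<Gamma>) \<Delta>"
  proof (rule ccontr)
    assume nd: "\<not> derivable (add_mset A \<Gamma>) \<Delta>"
    let ?w = "(add_mset A \<Gamma>, \<Delta>)"
    have c1: "?w \<in> Wc" and c2: "\<forall>f\<in>#add_mset A \<Gamma>. sat Wc Rc Vc ?w f" and c3: "\<forall>f\<in>#\<Delta>. \<not> sat Wc Rc Vc ?w f"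
      using completeness[OF nd] by blast+
    have "sat Wc Rc Vc ?w A \<and> (\<forall>f\<in>#\<Gamma>. sat Wc Rc Vc ?w f)" using c2 by simp
    then have sa: "sat Wc Rc Vc ?w A" and g: "\<forall>f\<in>#\<Gamma>. sat Wc Rc Vc ?w f" by blast+
    obtain \<chi> where ch: "\<chi> \<in> Good" "sat Wc Rc Vc ?w \<chi>" using sA sa by blast
    have "\<forall>(W :: (('ag, 'p) fm multiset \<times> ('ag, 'p) fm multiset) set) R V w.
     pmodel W R \<longrightarrow> w \<in> W \<longrightarrow> sat W R V w \<chi> \<longrightarrow> (\<forall>f\<in>#\<Gamma>. sat W R V w f) \<longrightarrow> (\<exists>f\<in>#\<Delta>. sat W R V w f)"
      using ch(1) unfolding Good_def mem_Collect_eq by (rule conjunct2)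
    note gg = mp[OF mp[OF mp[OF mp[OF spec[OF spec[OF spec[OF spec[OF this, of Wc], of Rc], of Vc], of ?w] pmodel_c] c1] ch(2)] g]
    then show False using c3 by blast
  qed
  have iii: "derivable \<Pi> (add_mset A \<Lambda>)"
    if wf: "\<forall>B \<in># \<Pi> + \<Lambda>. wff B" and pn: "p \<notin> mvars (\<Pi> + \<Lambda>)" and an: "a \<notin> magts (\<Pi> + \<Lambda>)"
      and der: "derivable (\<Pi> + \<Gamma>) (\<Delta> + \<Lambda>)" for \<Pi> \<Lambda>
  proof (rule ccontr)
    assume nd: "\<not> derivable \<Pi> (add_mset A \<Lambda>)"
    let ?w = "(\<Pi>, add_mset A \<Lambda>)"
    have wW: "?w \<in> Wc" and cP: "\<forall>f\<in>#\<Pi>. sat Wc Rc Vc ?w f" and cL: "\<forall>f\<in>#add_mset A \<Lambda>. \<not> sat Wc Rc Vc ?w f"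
      using completeness[OF nd] by blast+
    have "\<not> sat Wc Rc Vc ?w A \<and> (\<forall>f\<in>#\<Lambda>. \<not> sat Wc Rc Vc ?w f)" using cL by simp
    then have nA: "\<not> sat Wc Rc Vc ?w A" and nL: "\<forall>f\<in>#\<Lambda>. \<not> sat Wc Rc Vc ?w f" by blast+
    let ?\<chi> = "chr L Cg Wc Rc Vc n ?w"
    have chi_in: "?\<chi> \<in> Ch L Cg n" by (rule chr_Ch)
    have chi_sat: "sat Wc Rc Vc ?w ?\<chi>"
      using chr_sat[OF fL fCg wW wW, where R=Rc and V=Vc and R'=Rc and V'=Vc and k=n]
        bis_refl[of L Cg Wc Rc Vc n ?w] by simp
    have "?\<chi> \<notin> Good" using nA chi_sat sA by blast
    then have "\<not> (\<forall>(W :: (('ag, 'p) fm multiset \<times> ('ag, 'p) fm multiset) set) R V w.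
     pmodel W R \<longrightarrow> w \<in> W \<longrightarrow> sat W R V w ?\<chi> \<longrightarrow> (\<forall>f\<in>#\<Gamma>. sat W R V w f) \<longrightarrow> (\<exists>f\<in>#\<Delta>. sat W R V w f))"
      using chi_in unfolding Good_def mem_Collect_eq by blast
    then obtain W' :: "(('ag, 'p) fm multiset \<times> ('ag, 'p) fm multiset) set" and R' V' w'
      where m': "pmodel W' R'" "w' \<in> W'" "sat W' R' V' w' ?\<chi>" "\<forall>f\<in>#\<Gamma>. sat W' R' V' w' f"
        "\<not> (\<exists>f\<in>#\<Delta>. sat W' R' V' w' f)"
      by blast
    have b: "bis L Cg Wc Rc Vc W' R' V' n ?w w'"
      using chr_sat[OF fL fCg wW m'(2), where R=Rc and V=Vc and R'=R' and V'=V' and k=n] m'(3) by simp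
    interpret amal Wc Rc Vc W' R' V' L Cg Vp Ap p a
      by unfold_locales (auto simp: pmodel_c m'(1) L_def Cg_def)
    let ?x = "(Some ?w, Some (w', n))"
    have xW: "?x \<in> W2" using W2_SS wW m'(2) b by blast
    have psi: "sat W2 R2 V2 ?x f = sat Wc Rc Vc ?w f" if "f \<in># \<Pi> + \<Lambda>" for f
    proof (rule psi_side)
      show "wff f" using wf that by blast
      show "p \<notin> vars f" using pn that unfolding mvars_def by blast
      show "a \<notin> agts f" using an that unfolding magts_def by blast
    qed (use xW in auto)
    have phi: "sat W2 R2 V2 ?x f = sat W' R' V' w' f" if "f \<in># \<Gamma> + \<Delta>" for f
    proof (rule phi_side)
      show "wff f" using assms that by blast
      show "vars f \<subseteq> Vp" using that unfolding Vp_def mvars_def by blast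
      show "agts f \<subseteq> Ap" using that unfolding Ap_def magts_def by blast
      show "depth f \<le> n" unfolding n_def by (rule depth_le[OF that])
    qed (use xW in auto)
    have "\<forall>f\<in>#\<Pi> + \<Gamma>. sat W2 R2 V2 ?x f"
    proof
      fix f assume "f \<in># \<Pi> + \<Gamma>"
      then consider "f \<in># \<Pi>" | "f \<in># \<Gamma>" by auto
      then show "sat W2 R2 V2 ?x f"
      proof cases
        case 1 then show ?thesis using psi[of f] cP by auto
      next
        case 2 then show ?thesis using phi[of f] m'(4) by auto
      qed
    qed
    then have "\<exists>f\<in>#\<Delta> + \<Lambda>. sat W2 R2 V2 ?x f"
      using soundness[OF der pmodel2 xW] by blast
    then obtain f where f: "f \<in># \<Delta> + \<Lambda>" "sat W2 R2 V2 ?x f" by blast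
    then consider "f \<in># \<Delta>" | "f \<in># \<Lambda>" by auto
    then show False
    proof cases
      case 1 then show ?thesis using phi[of f] f m'(5) by auto
    next
      case 2 then show ?thesis using psi[of f] f nL by auto
    qed
  qed
  show ?thesis using i1 i2 i3 ii iii by blast
qed


end
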